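(* Let $m$ be a positive integer, let $B_m$ be the cardinal B-spline of degree $m$, and let $\omega_i=i/2$ for $i=1,\dots,2m+1$ (so $\{\omega_1,\dots,\omega_{2m+1}\}=\{\tfrac12,1,\tfrac32,\dots,m+\tfrac12\}$). Then the $(2m+1)\times(2m+1)$ matrix $A_{X_m}$ with entries $$(A_{X_m})_{i,j}=B_m\big(m+1+\omega_i-2\omega_j\big),\qquad i,j=1,\dots,2m+1,$$ is nonsingular.
   Context: The cardinal B-spline of degree $m$ is $B_m=\chi_{[0,1]}*\chi_{[0,1]}*\dots*\chi_{[0,1]}$ ($m+1$ factors), the $(m+1)$-fold convolution of the indicator function of $[0,1]$; equivalently it is the box spline $B_X$ associated with the list $X=X_m=(1,1,\dots,1)$ ($m+1$ entries) in $\mathbb{R}$, defined by $\int f\,B_X=\int_{[0,1]^{m+1}} f(t_1+\dots+t_{m+1})\,dt$. It is a spline of degree $m$ with integer knots, supported on $[0,m+1]$. The numbers $\omega_i$ are the half-integer points of the interior $]0,m+1[$ of its support, and $m+1$ is the sum of the elements of $X_m$. *)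

theory Defs
  imports "HOL-Analysis.Analysis" "Jordan_Normal_Form.Determinant"
begin

text \<open>Cardinal B-spline of degree m: the (m+1)-fold convolution of the indicator
  function of [0,1].\<close>
fun cardinal_bspline :: "nat \<Rightarrow> real \<Rightarrow> real" where
  "cardinal_bspline 0 x = indicator {0..1} x"
| "cardinal_bspline (Suc m) x = integral {0..1} (\<lambda>t. cardinal_bspline m (x - t))"

definition omega :: "nat \<Rightarrow> real" where
  "omega i = real i / 2"

text \<open>The (2m+1)x(2m+1) matrix A_{X_m}; JNF matrices are 0-indexed, so entry (i,j)
  corresponds to the paper's entry (i+1,j+1).\<close>
definition A_X :: "nat \<Rightarrow> real mat" where
  "A_X m = mat (2*m+1) (2*m+1)
     (\<lambda>(i,j). cardinal_bspline m (real (m+1) + omega (i+1) - 2 * omega (j+1)))"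

end

theory Submission
  imports Defs "HOL-Computational_Algebra.Computational_Algebra" "HOL-Computational_Algebra.Field_as_Ring"
begin


definition tp :: "nat \<Rightarrow> real \<Rightarrow> real" where
  "tp n y = (if y > 0 then y ^ n else 0)"

definition TT :: "nat \<Rightarrow> real \<Rightarrow> real" where
  "TT m x = (\<Sum>k\<le>m+1. (-1)^k * real (m+1 choose k) * tp m (x - real k))"

lemma tp_Suc_max: "tp (Suc n) y = (max y 0) ^ Suc n"
  by (simp add: tp_def max_def)

lemma tp_integral:
  "((\<lambda>t. tp n (y - t)) has_integral ((tp (Suc n) y - tp (Suc n) (y - 1)) / real (Suc n))) {0..1}"
proof -
  define f where "f t = (-1 / real (Suc n)) * tp (Suc n) (y - t)" for t
  have cont: "continuous_on {0..1} f"
    unfolding f_def tp_Suc_max by (intro continuous_intros) auto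
  have der: "(f has_vector_derivative tp n (y - t)) (at t)" if "t \<in> {0<..<1} - {y}" for t
  proof (cases "y - t > 0")
    case True
    have d0: "((\<lambda>t. y - t) has_real_derivative -1) (at t)"
      by (auto intro!: derivative_eq_intros)
    have d1: "((\<lambda>t. (y - t) ^ Suc n) has_real_derivative (real (Suc n) * (y - t) ^ (Suc n - 1) * (-1))) (at t)"
      using DERIV_chain2[OF DERIV_pow[of "Suc n" "y - t"] d0] by simp
    have "((\<lambda>t. (-1 / real (Suc n)) * (y - t) ^ Suc n) has_real_derivative
            (-1 / real (Suc n)) * (real (Suc n) * (y - t) ^ (Suc n - 1) * (-1))) (at t)"
      by (rule DERIV_cmult[OF d1])
    then have "((\<lambda>t. (-1 / real (Suc n)) * (y - t) ^ Suc n) has_real_derivative (y - t) ^ n) (at t)"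
      by (simp del: of_nat_Suc)
    then have "(f has_real_derivative (y - t) ^ n) (at t)"
    proof (rule has_field_derivative_transform_within_open[where S="{..<y}"])
      show "t \<in> {..<y}" using True by simp
    qed (auto simp: f_def tp_def)
    then show ?thesis using True by (simp add: tp_def has_real_derivative_iff_has_vector_derivative)
  next
    case False
    then have "y - t < 0" using that by auto
    have "((\<lambda>t. 0) has_real_derivative 0) (at t)" by simp
    then have "(f has_real_derivative 0) (at t)"
    proof (rule has_field_derivative_transform_within_open[where S="{y<..}"])
      show "t \<in> {y<..}" using \<open>y - t < 0\<close> by simp
    qed (auto simp: f_def tp_def)
    then show ?thesis using False by (simp add: tp_def has_real_derivative_iff_has_vector_derivative)
  qed
  have "((\<lambda>t. tp n (y - t)) has_integral (f 1 - f 0)) {0..1}"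
    by (rule fundamental_theorem_of_calculus_interior_strong[where S="{y}"]) (use cont der in auto)
  moreover have "f 1 - f 0 = (tp (Suc n) y - tp (Suc n) (y - 1)) / real (Suc n)"
    unfolding f_def by (simp add: divide_simps del: of_nat_Suc)
  ultimately show ?thesis by simp
qed

lemma sum_shift_lt:
  fixes f :: "nat \<Rightarrow> real"
  shows "(\<Sum>k\<le>N. f k) = f 0 + (\<Sum>k<N. f (Suc k))"
proof (cases N)
  case 0 then show ?thesis by simp
next
  case (Suc M)
  have "(\<Sum>k\<le>Suc M. f k) = f 0 + (\<Sum>k\<le>M. f (Suc k))"
    by (rule sum.atMost_Suc_shift)
  then show ?thesis using Suc by (simp only: lessThan_Suc_atMost)
qed

lemma sum_lt_le:
  fixes f :: "nat \<Rightarrow> real"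
  assumes "f N = 0"
  shows "(\<Sum>k<N. f k) = (\<Sum>k\<le>N. f k)"
proof -
  have "(\<Sum>k\<le>N. f k) = (\<Sum>k<Suc N. f k)" by (simp only: lessThan_Suc_atMost)
  also have "\<dots> = (\<Sum>k<N. f k)" using assms by simp
  finally show ?thesis by simp
qed

lemma sum_shift_le:
  fixes f :: "nat \<Rightarrow> real"
  shows "(\<Sum>k\<le>Suc N. f k) = f 0 + (\<Sum>k\<le>N. f (Suc k))"
  by (rule sum.atMost_Suc_shift)

lemma pascal_sum:
  fixes h :: "nat \<Rightarrow> real"
  shows "(\<Sum>k\<le>Suc N. real (Suc N choose k) * h k) =
         (\<Sum>k\<le>N. real (N choose k) * h k) + (\<Sum>k\<le>N. real (N choose k) * h (Suc k))"
proof -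
  have "(\<Sum>k\<le>Suc N. real (Suc N choose k) * h k) = h 0 + (\<Sum>k\<le>N. real (Suc N choose Suc k) * h (Suc k))"
    by (subst sum_shift_le) simp
  also have "\<dots> = h 0 + (\<Sum>k\<le>N. real (N choose Suc k) * h (Suc k)) + (\<Sum>k\<le>N. real (N choose k) * h (Suc k))"
    by (simp only: binomial_Suc_Suc of_nat_add distrib_right sum.distrib add.assoc)
  also have "h 0 + (\<Sum>k\<le>N. real (N choose Suc k) * h (Suc k)) = (\<Sum>k\<le>N. real (N choose k) * h k)"
  proof -
    have "(\<Sum>k\<le>N. real (N choose k) * h k) = h 0 + (\<Sum>k<N. real (N choose Suc k) * h (Suc k))"
      by (subst sum_shift_lt) simp
    also have "(\<Sum>k<N. real (N choose Suc k) * h (Suc k)) = (\<Sum>k\<le>N. real (N choose Suc k) * h (Suc k))"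
      by (rule sum_lt_le) simp
    finally show ?thesis by simp
  qed
  finally show ?thesis by simp
qed

lemma k_choose_sum:
  fixes g :: "nat \<Rightarrow> real"
  shows "(\<Sum>k\<le>N. real k * real (N choose k) * g k) =
         (\<Sum>k\<le>N. real (N - k) * real (N choose k) * g (Suc k))"
proof -
  have "(\<Sum>k\<le>N. real k * real (N choose k) * g k) = (\<Sum>k<N. real (Suc k) * real (N choose Suc k) * g (Suc k))"
    by (subst sum_shift_lt) simp
  also have "\<dots> = (\<Sum>k<N. real (N - k) * real (N choose k) * g (Suc k))"
  proof (rule sum.cong[OF refl])
    fix k assume "k \<in> {..<N}"
    have "Suc k * (N choose Suc k) = (N - k) * (N choose k)"
    proof (cases N)
      case 0 then show ?thesis by simp
    next
      case (Suc M)
      have "Suc k * (Suc M choose Suc k) = Suc M * (M choose k)" by (rule Suc_times_binomial)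
      moreover have "(Suc M - k) * (Suc M choose k) = Suc M * (Suc M - 1 choose k)" by (rule binomial_absorb_comp)
      ultimately show ?thesis using Suc by simp
    qed
    then have "real (Suc k) * real (N choose Suc k) = real (N - k) * real (N choose k)"
      by (metis of_nat_mult)
    then show "real (Suc k) * real (N choose Suc k) * g (Suc k) = real (N - k) * real (N choose k) * g (Suc k)"
      by simp
  qed
  also have "\<dots> = (\<Sum>k\<le>N. real (N - k) * real (N choose k) * g (Suc k))"
    by (rule sum_lt_le) simp
  finally show ?thesis .
qed


lemma TT_integral:
  "((\<lambda>t. TT m (x - t)) has_integral (TT (Suc m) x / real (Suc m))) {0..1}"
proof -
  let ?c = "\<lambda>k. (-1)^k * real (m+1 choose k)"
  have "((\<lambda>t. \<Sum>k\<le>m+1. ?c k * tp m ((x - real k) - t)) has_integral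
        (\<Sum>k\<le>m+1. ?c k * ((tp (Suc m) (x - real k) - tp (Suc m) (x - real k - 1)) / real (Suc m)))) {0..1}"
    by (intro has_integral_sum has_integral_mult_right tp_integral) auto
  moreover have "(\<lambda>t. \<Sum>k\<le>m+1. ?c k * tp m ((x - real k) - t)) = (\<lambda>t. TT m (x - t))"
    by (auto simp: TT_def algebra_simps)
  moreover have "(\<Sum>k\<le>m+1. ?c k * ((tp (Suc m) (x - real k) - tp (Suc m) (x - real k - 1)) / real (Suc m)))
      = TT (Suc m) x / real (Suc m)"
  proof -
    define h where "h k = (-1::real)^k * tp (Suc m) (x - real k)" for k
    have "TT (Suc m) x = (\<Sum>k\<le>Suc (m+1). real (Suc (m+1) choose k) * h k)"
      by (simp add: TT_def h_def algebra_simps)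
    also have "\<dots> = (\<Sum>k\<le>m+1. real (m+1 choose k) * h k) + (\<Sum>k\<le>m+1. real (m+1 choose k) * h (Suc k))"
      by (rule pascal_sum)
    also have "\<dots> = (\<Sum>k\<le>m+1. ?c k * (tp (Suc m) (x - real k) - tp (Suc m) (x - real k - 1)))"
      by (simp add: h_def sum.distrib[symmetric] algebra_simps)
    finally have eq: "TT (Suc m) x = (\<Sum>k\<le>m+1. ?c k * (tp (Suc m) (x - real k) - tp (Suc m) (x - real k - 1)))" .
    show ?thesis by (simp only: eq sum_divide_distrib times_divide_eq_right)
  qed
  ultimately show ?thesis by simp
qed

lemma B_TT: "m \<ge> 1 \<or> y \<noteq> 0 \<Longrightarrow> cardinal_bspline m y = TT m y / fact m"
proof (induction m arbitrary: y)
  case 0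
  then have "y \<noteq> 0" by simp
  then show ?case
    by (auto simp: TT_def tp_def indicator_def)
next
  case (Suc m)
  have "((\<lambda>t. TT m (y - t) / fact m) has_integral (TT (Suc m) y / real (Suc m) / fact m)) {0..1}"
    by (rule has_integral_divide[OF TT_integral])
  then have "((\<lambda>t. cardinal_bspline m (y - t)) has_integral (TT (Suc m) y / real (Suc m) / fact m)) {0..1}"
    by (rule has_integral_spike_finite[where S="{y}", rotated 2]) (use Suc.IH in auto)
  then have "cardinal_bspline (Suc m) y = TT (Suc m) y / real (Suc m) / fact m"
    by (simp add: integral_unique)
  then show ?case by (simp add: field_simps del: of_nat_Suc)
qed


lemma tp_Suc: "tp (Suc n) z = z * tp n z"
  by (simp add: tp_def)

lemma TT_rec: "TT (Suc n) y = y * TT n y + (real n + 2 - y) * TT n (y - 1)"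
proof -
  define N where "N = Suc n"
  define g where "g k = (-1::real)^k * tp n (y - real k)" for k
  have L: "TT (Suc n) y = (\<Sum>k\<le>Suc N. real (Suc N choose k) * ((y - real k) * g k))"
    unfolding TT_def g_def N_def by (simp add: tp_Suc algebra_simps)
  also have "\<dots> = (\<Sum>k\<le>N. real (N choose k) * ((y - real k) * g k))
      + (\<Sum>k\<le>N. real (N choose k) * ((y - real (Suc k)) * g (Suc k)))"
    by (rule pascal_sum)
  finally have L: "TT (Suc n) y = (\<Sum>k\<le>N. real (N choose k) * ((y - real k) * g k))
      + (\<Sum>k\<le>N. real (N choose k) * ((y - real (Suc k)) * g (Suc k)))" .
  have R1: "y * TT n y = (\<Sum>k\<le>N. real (N choose k) * (y * g k))"
    unfolding TT_def g_def N_def by (simp add: sum_distrib_left algebra_simps)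
  have R2: "(real n + 2 - y) * TT n (y - 1) = (\<Sum>k\<le>N. real (N choose k) * (- (real N + 1 - y) * g (Suc k)))"
    unfolding TT_def g_def N_def by (simp add: sum_distrib_left algebra_simps)
  have K: "(\<Sum>k\<le>N. real k * real (N choose k) * g k) = (\<Sum>k\<le>N. real (N - k) * real (N choose k) * g (Suc k))"
    by (rule k_choose_sum)
  have D1: "(\<Sum>k\<le>N. real (N choose k) * ((y - real k) * g k)) - (\<Sum>k\<le>N. real (N choose k) * (y * g k))
      = - (\<Sum>k\<le>N. real k * real (N choose k) * g k)"
    by (simp add: sum_subtractf[symmetric] sum_negf[symmetric] algebra_simps)
  have D2: "(\<Sum>k\<le>N. real (N choose k) * ((y - real (Suc k)) * g (Suc k)))
      - (\<Sum>k\<le>N. real (N choose k) * (- (real N + 1 - y) * g (Suc k)))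
      = (\<Sum>k\<le>N. real (N - k) * real (N choose k) * g (Suc k))"
    unfolding sum_subtractf[symmetric]
    by (rule sum.cong) (auto simp: of_nat_diff algebra_simps)
  show ?thesis using L R1 R2 K D1 D2 by linarith
qed

lemma B_rec:
  assumes "m \<ge> 1"
  shows "real (Suc m) * cardinal_bspline (Suc m) y = y * cardinal_bspline m y + (real m + 2 - y) * cardinal_bspline m (y - 1)"
proof -
  have "real (Suc m) * cardinal_bspline (Suc m) y = real (Suc m) * (TT (Suc m) y / fact (Suc m))"
    using B_TT[of "Suc m" y] by simp
  also have "\<dots> = TT (Suc m) y / fact m"
    by (simp add: field_simps del: of_nat_Suc)
  also have "\<dots> = (y * TT m y + (real m + 2 - y) * TT m (y - 1)) / fact m"
    by (simp add: TT_rec)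
  also have "\<dots> = y * cardinal_bspline m y + (real m + 2 - y) * cardinal_bspline m (y - 1)"
  proof -
    have e1: "TT m y = fact m * cardinal_bspline m y" using B_TT[of m y] assms by simp
    have e2: "TT m (y - 1) = fact m * cardinal_bspline m (y - 1)" using B_TT[of m "y - 1"] assms by simp
    show ?thesis unfolding e1 e2 by (simp add: field_simps)
  qed
  finally show ?thesis .
qed

lemma B1: "cardinal_bspline 1 y = tp 1 y - 2 * tp 1 (y - 1) + tp 1 (y - 2)"
  using B_TT[of 1 y] by (simp add: TT_def numeral_2_eq_2 algebra_simps)


abbreviation "BB \<equiv> cardinal_bspline"
declare cardinal_bspline.simps[simp del]

lemma B1_cases: "BB 1 y = (if y \<le> 0 then 0 else if y \<le> 1 then y else if y \<le> 2 then 2 - y else 0)"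
  using B1[of y] by (simp add: tp_def)

lemma B_support:
  assumes "m \<ge> 1"
  shows "(0 < y \<and> y < real m + 1 \<longrightarrow> BB m y > 0) \<and> (\<not> (0 < y \<and> y < real m + 1) \<longrightarrow> BB m y = 0)"
  using assms
proof (induction m arbitrary: y rule: nat_induct_at_least)
  case base
  then show ?case using B1_cases[of y] B1_cases[of "2 - y"] by auto
next
  case (Suc m)
  have r: "BB (Suc m) y = (y * BB m y + (real m + 2 - y) * BB m (y - 1)) / real (Suc m)"
    using B_rec[OF Suc.hyps, of y] by (simp add: field_simps del: of_nat_Suc)
  have a: "BB m y \<ge> 0" "BB m (y - 1) \<ge> 0" using Suc.IH[of y] Suc.IH[of "y - 1"] by (auto simp: less_imp_le)
  show ?case
  proof (intro conjI impI)
    assume y: "0 < y \<and> y < real (Suc m) + 1"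
    show "BB (Suc m) y > 0"
    proof (cases "y < real m + 1")
      case True
      then have "BB m y > 0" using Suc.IH[of y] y by auto
      moreover have "(real m + 2 - y) * BB m (y - 1) \<ge> 0" using y a by auto
      ultimately show ?thesis unfolding r using y by (intro divide_pos_pos) (auto intro: add_pos_nonneg)
    next
      case False
      then have "BB m (y - 1) > 0" using Suc.IH[of "y - 1"] y Suc.hyps by auto
      moreover have "y * BB m y \<ge> 0" using y a by auto
      ultimately show ?thesis unfolding r using y by (intro divide_pos_pos) (auto intro: add_nonneg_pos)
    qed
  next
    assume y: "\<not> (0 < y \<and> y < real (Suc m) + 1)"
    then have "BB m y = 0" "BB m (y - 1) = 0" using Suc.IH[of y] Suc.IH[of "y - 1"] by auto
    then show "BB (Suc m) y = 0" unfolding r by simp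
  qed
qed

lemma B_nonneg: "m \<ge> 1 \<Longrightarrow> BB m y \<ge> 0"
  using B_support[of m y] by (auto simp: less_imp_le)

lemma B_pos: "m \<ge> 1 \<Longrightarrow> 0 < y \<Longrightarrow> y < real m + 1 \<Longrightarrow> BB m y > 0"
  using B_support[of m y] by auto

lemma B_zero: "m \<ge> 1 \<Longrightarrow> y \<le> 0 \<or> y \<ge> real m + 1 \<Longrightarrow> BB m y = 0"
  using B_support[of m y] by auto

lemma B_sym:
  assumes "m \<ge> 1"
  shows "BB m (real m + 1 - y) = BB m y"
  using assms
proof (induction m arbitrary: y rule: nat_induct_at_least)
  case base
  then show ?case using B1_cases[of y] B1_cases[of "2 - y"] by auto
next
  case (Suc m)
  have "real (Suc m) * BB (Suc m) (real (Suc m) + 1 - y)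
      = (real (Suc m) + 1 - y) * BB m (real (Suc m) + 1 - y) + (real m + 2 - (real (Suc m) + 1 - y)) * BB m (real (Suc m) + 1 - y - 1)"
    by (rule B_rec[OF Suc.hyps])
  also have "BB m (real (Suc m) + 1 - y) = BB m (y - 1)"
    using Suc.IH[of "y - 1"] by (simp add: algebra_simps)
  also have "BB m (real (Suc m) + 1 - y - 1) = BB m y"
    using Suc.IH[of y] by (simp add: algebra_simps)
  also have "(real (Suc m) + 1 - y) * BB m (y - 1) + (real m + 2 - (real (Suc m) + 1 - y)) * BB m y
      = real (Suc m) * BB (Suc m) y"
    using B_rec[OF Suc.hyps, of y] by (simp add: algebra_simps)
  finally show ?case by (simp del: of_nat_Suc)
qed


lemma refine_sum:
  fixes f :: "real \<Rightarrow> real" and x :: real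
  shows "(\<Sum>k\<le>Suc N. real (Suc N choose k) *
            ((x - real k) * f (x - real k) + (real N + 1 - (x - real k)) * f (x - real k - 1)))
       = x * (\<Sum>k\<le>N. real (N choose k) * f (x - real k))
         + (2 * real N + 2 - x) * (\<Sum>k\<le>N. real (N choose k) * f (x - real k - 2))"
proof -
  define h where "h k = (x - real k) * f (x - real k) + (real N + 1 - (x - real k)) * f (x - real k - 1)" for k
  define S1 where "S1 = (\<Sum>k\<le>N. real (N choose k) * f (x - real k))"
  define S2 where "S2 = (\<Sum>k\<le>N. real k * real (N choose k) * f (x - real k))"
  define S3 where "S3 = (\<Sum>k\<le>N. real (N choose k) * f (x - real k - 1))"
  define S4 where "S4 = (\<Sum>k\<le>N. real k * real (N choose k) * f (x - real k - 1))"
  define S5 where "S5 = (\<Sum>k\<le>N. real (N choose k) * f (x - real k - 2))"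
  define S6 where "S6 = (\<Sum>k\<le>N. real k * real (N choose k) * f (x - real k - 2))"
  have P: "(\<Sum>k\<le>Suc N. real (Suc N choose k) * h k) = (\<Sum>k\<le>N. real (N choose k) * h k) + (\<Sum>k\<le>N. real (N choose k) * h (Suc k))"
    by (rule pascal_sum)
  have H1: "(\<Sum>k\<le>N. real (N choose k) * h k) = x * S1 - S2 + (real N + 1 - x) * S3 + S4"
    unfolding h_def S1_def S2_def S3_def S4_def
    by (simp add: sum.distrib sum_subtractf sum_distrib_left algebra_simps)
  have H2: "(\<Sum>k\<le>N. real (N choose k) * h (Suc k)) = (x - 1) * S3 - S4 + (real N + 2 - x) * S5 + S6"
    unfolding h_def S3_def S4_def S5_def S6_def
    by (simp add: sum.distrib sum_subtractf sum_distrib_left algebra_simps)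
  have K1: "S2 = real N * S3 - S4"
  proof -
    have "S2 = (\<Sum>k\<le>N. real (N - k) * real (N choose k) * f (x - real (Suc k)))"
      unfolding S2_def by (rule k_choose_sum)
    also have "\<dots> = (\<Sum>k\<le>N. real N * (real (N choose k) * f (x - real k - 1)) - real k * real (N choose k) * f (x - real k - 1))"
      by (rule sum.cong) (auto simp: of_nat_diff algebra_simps)
    finally show ?thesis unfolding S3_def S4_def by (simp add: sum_subtractf sum_distrib_left)
  qed
  have K2: "S4 = real N * S5 - S6"
  proof -
    have "S4 = (\<Sum>k\<le>N. real (N - k) * real (N choose k) * f (x - real (Suc k) - 1))"
      unfolding S4_def by (rule k_choose_sum)
    also have "\<dots> = (\<Sum>k\<le>N. real N * (real (N choose k) * f (x - real k - 2)) - real k * real (N choose k) * f (x - real k - 2))"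
      by (rule sum.cong) (auto simp: of_nat_diff algebra_simps)
    finally show ?thesis unfolding S5_def S6_def by (simp add: sum_subtractf sum_distrib_left)
  qed
  have "(\<Sum>k\<le>Suc N. real (Suc N choose k) * h k) = x * S1 + (2 * real N + 2 - x) * S5"
    using P H1 H2 K1 K2 by (simp add: algebra_simps)
  then show ?thesis unfolding h_def S1_def S5_def .
qed

lemma refinement:
  assumes "m \<ge> 1"
  shows "BB m (x / 2) = (\<Sum>k\<le>m+1. real (m+1 choose k) * BB m (x - real k)) / 2 ^ m"
  using assms
proof (induction m arbitrary: x rule: nat_induct_at_least)
  case base
  show ?case using B1_cases[of "x/2"] B1_cases[of x] B1_cases[of "x - 1"] B1_cases[of "x - 2"]
    by (simp add: numeral_2_eq_2 split: if_splits)
next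
  case (Suc n)
  define N where "N = Suc n"
  define F where "F y = (\<Sum>k\<le>N. real (N choose k) * BB n (y - real k))" for y
  have IH1: "BB n (x / 2) = F x / 2 ^ n" using Suc.IH[of x] by (simp add: F_def N_def)
  have IH2: "BB n (x / 2 - 1) = F (x - 2) / 2 ^ n" using Suc.IH[of "x - 2"] by (simp add: F_def N_def diff_divide_distrib algebra_simps)
  have L: "real (Suc n) * BB (Suc n) (x / 2) = (x * F x + (2 * real N + 2 - x) * F (x - 2)) / 2 ^ Suc n"
    using B_rec[OF Suc.hyps, of "x/2"] IH1 IH2 by (simp add: N_def field_simps)
  have R: "real (Suc n) * (\<Sum>k\<le>N+1. real (N+1 choose k) * BB (Suc n) (x - real k))
      = (\<Sum>k\<le>Suc N. real (Suc N choose k) *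
            ((x - real k) * BB n (x - real k) + (real N + 1 - (x - real k)) * BB n (x - real k - 1)))"
    unfolding sum_distrib_left
  proof (rule sum.cong)
    fix k assume "k \<in> {..Suc N}"
    have e: "real (Suc n) * BB (Suc n) (x - real k) = (x - real k) * BB n (x - real k) + (real n + 2 - (x - real k)) * BB n (x - real k - 1)"
      by (rule B_rec[OF Suc.hyps])
    show "real (Suc n) * (real (N + 1 choose k) * BB (Suc n) (x - real k)) =
         real (Suc N choose k) * ((x - real k) * BB n (x - real k) + (real N + 1 - (x - real k)) * BB n (x - real k - 1))"
    proof -
      have "real (Suc n) * (real (N + 1 choose k) * BB (Suc n) (x - real k))
          = real (Suc N choose k) * (real (Suc n) * BB (Suc n) (x - real k))" by simp
      also have "\<dots> = real (Suc N choose k) * ((x - real k) * BB n (x - real k) + (real n + 2 - (x - real k)) * BB n (x - real k - 1))"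
        by (simp only: e)
      also have "real n + 2 = real N + 1" by (simp add: N_def)
      finally show ?thesis .
    qed
  qed (simp add: N_def)
  also have "\<dots> = x * F x + (2 * real N + 2 - x) * F (x - 2)"
    unfolding F_def by (subst refine_sum) (simp add: algebra_simps)
  finally have R: "real (Suc n) * (\<Sum>k\<le>N+1. real (N+1 choose k) * BB (Suc n) (x - real k)) = x * F x + (2 * real N + 2 - x) * F (x - 2)" .
  have "real (Suc n) * BB (Suc n) (x / 2) = real (Suc n) * ((\<Sum>k\<le>N+1. real (N+1 choose k) * BB (Suc n) (x - real k)) / 2 ^ Suc n)"
    using L R by (simp add: field_simps)
  then have "BB (Suc n) (x / 2) = (\<Sum>k\<le>N+1. real (N+1 choose k) * BB (Suc n) (x - real k)) / 2 ^ Suc n"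
    by (metis mult_cancel_left of_nat_eq_0_iff nat.distinct(1))
  then show ?case by (simp only: N_def Suc_eq_plus1)
qed


definition PiB :: "nat \<Rightarrow> real \<Rightarrow> real" where
  "PiB m x = (\<Sum>n\<le>m+1. BB m (real n) * x ^ n)"

definition dPi :: "nat \<Rightarrow> real \<Rightarrow> real" where
  "dPi m x = (\<Sum>n\<le>m+1. BB m (real n) * (real n * x ^ (n - Suc 0)))"

lemma Pi_deriv: "(PiB m has_real_derivative dPi m x) (at x)"
  unfolding PiB_def dPi_def
  by (intro DERIV_sum DERIV_cmult DERIV_pow)

lemma x_dPi: "x * dPi m x = (\<Sum>n\<le>m+1. real n * BB m (real n) * x ^ n)"
  unfolding dPi_def sum_distrib_left
proof (rule sum.cong[OF refl])
  fix n
  show "x * (BB m (real n) * (real n * x ^ (n - Suc 0))) = real n * BB m (real n) * x ^ n"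
    by (cases n) auto
qed

lemma Pi_0: "m \<ge> 1 \<Longrightarrow> PiB m 0 = 0"
  unfolding PiB_def by (simp add: B_zero zero_power)

lemma Pi_identity:
  assumes "m \<ge> 1"
  shows "(1 - x) * (x * dPi m x) + real (Suc m) * x * PiB m x = real (Suc m) * PiB (Suc m) x"
proof -
  have rec: "real (Suc m) * BB (Suc m) (real n) = real n * BB m (real n) + (real m + 2 - real n) * BB m (real n - 1)" for n
    using B_rec[OF assms, of "real n"] by simp
  have "real (Suc m) * PiB (Suc m) x = (\<Sum>n\<le>m+2. (real (Suc m) * BB (Suc m) (real n)) * x ^ n)"
    unfolding PiB_def sum_distrib_left by (simp add: algebra_simps)
  also have "\<dots> = (\<Sum>n\<le>m+2. real n * BB m (real n) * x ^ n) + (\<Sum>n\<le>m+2. (real m + 2 - real n) * BB m (real n - 1) * x ^ n)"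
    unfolding sum.distrib[symmetric] by (rule sum.cong[OF refl]) (subst rec, simp add: algebra_simps)
  also have "(\<Sum>n\<le>m+2. real n * BB m (real n) * x ^ n) = (\<Sum>n\<le>m+1. real n * BB m (real n) * x ^ n)"
    using B_zero[OF assms, of "real (m+2)"] by simp
  also have "(\<Sum>n\<le>m+2. (real m + 2 - real n) * BB m (real n - 1) * x ^ n)
      = (\<Sum>n\<le>m+1. (real m + 1 - real n) * BB m (real n) * x ^ Suc n)"
  proof -
    have "(\<Sum>n\<le>Suc (m+1). (real m + 2 - real n) * BB m (real n - 1) * x ^ n)
        = (real m + 2 - real 0) * BB m (real 0 - 1) * x ^ 0 + (\<Sum>n\<le>m+1. (real m + 2 - real (Suc n)) * BB m (real (Suc n) - 1) * x ^ Suc n)"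
      by (rule sum_shift_le)
    moreover have "BB m (real 0 - 1) = 0" using B_zero[OF assms, of "-1"] by simp
    ultimately show ?thesis by (simp add: algebra_simps)
  qed
  finally have R: "real (Suc m) * PiB (Suc m) x = (\<Sum>n\<le>m+1. real n * BB m (real n) * x ^ n) + (\<Sum>n\<le>m+1. (real m + 1 - real n) * BB m (real n) * x ^ Suc n)" .
  have L: "(1 - x) * (x * dPi m x) + real (Suc m) * x * PiB m x
      = (\<Sum>n\<le>m+1. real n * BB m (real n) * x ^ n) + (\<Sum>n\<le>m+1. (real m + 1 - real n) * BB m (real n) * x ^ Suc n)"
    unfolding x_dPi PiB_def
    by (simp add: sum_distrib_left sum_subtractf[symmetric] sum.distrib[symmetric] algebra_simps)
  show ?thesis using L R by simp
qed

lemma rolle_step: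
  assumes m: "m \<ge> 1" and ab: "a < b" "b \<le> 0" and pa: "PiB m a = 0" and pb: "PiB m b = 0"
  shows "\<exists>c. a < c \<and> c < b \<and> PiB (Suc m) c = 0"
proof -
  define g where "g x = PiB m x / (1 - x) ^ (m+1)" for x
  have dg: "(g has_real_derivative
     ((dPi m x * (1 - x) ^ (m+1) - PiB m x * (real (m+1) * (1 - x) ^ m * (-1))) / ((1 - x) ^ (m+1) * (1 - x) ^ (m+1)))) (at x)"
    if "x < 1" for x
  proof -
    have d1: "((\<lambda>x. 1 - x) has_real_derivative -1) (at x)" by (auto intro!: derivative_eq_intros)
    have d2: "((\<lambda>x. (1 - x) ^ (m+1)) has_real_derivative (real (m+1) * (1 - x) ^ m * (-1))) (at x)"
      using DERIV_chain2[OF DERIV_pow[of "m+1" "1 - x"] d1] by simp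
    show ?thesis unfolding g_def
      by (rule DERIV_divide[OF Pi_deriv d2]) (use that in simp)
  qed
  have cont: "continuous_on {a..b} g"
  proof (rule continuous_at_imp_continuous_on, intro ballI)
    fix x assume "x \<in> {a..b}"
    then have "x < 1" using ab by auto
    then show "isCont g x" using dg DERIV_isCont by blast
  qed
  have "g a = g b" unfolding g_def using pa pb by simp
  moreover have "g differentiable (at x)" if "a < x" "x < b" for x
  proof -
    have "x < 1" using that ab by auto
    then show ?thesis using dg[of x] unfolding differentiable_def has_field_derivative_def by blast
  qed
  ultimately obtain c where c: "a < c" "c < b" "(g has_real_derivative 0) (at c)"
    using Rolle[OF ab(1) _ cont] by blast
  have c1: "c < 1" using c ab by auto
  have "(dPi m c * (1 - c) ^ (m+1) - PiB m c * (real (m+1) * (1 - c) ^ m * (-1))) / ((1 - c) ^ (m+1) * (1 - c) ^ (m+1)) = 0"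
    using DERIV_unique[OF dg[OF c1] c(3)] .
  then have "dPi m c * (1 - c) ^ (m+1) + PiB m c * (real (m+1) * (1 - c) ^ m) = 0"
    using c1 by simp
  then have "(1 - c) ^ m * (dPi m c * (1 - c) + real (m+1) * PiB m c) = 0"
    by (simp add: algebra_simps)
  then have "dPi m c * (1 - c) + real (m+1) * PiB m c = 0" using c1 by simp
  then have "c * (dPi m c * (1 - c) + real (m+1) * PiB m c) = 0" by simp
  then have "real (Suc m) * PiB (Suc m) c = 0"
    using Pi_identity[OF m, of c] by (simp add: algebra_simps)
  then show ?thesis using c by auto
qed


lemma PiB_sym:
  assumes m: "m \<ge> 1" and x: "x \<noteq> 0"
  shows "PiB m (1 / x) * x ^ (m+1) = PiB m x"
proof -
  define h where "h n = BB m (real n) * x ^ (m + 1 - n)" for n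
  have "PiB m (1 / x) * x ^ (m+1) = (\<Sum>n<m+2. h n)"
    unfolding PiB_def sum_distrib_right h_def
  proof -
    have "{..m+1} = {..<m+2}" by auto
    moreover have "BB m (real n) * (1 / x) ^ n * x ^ (m + 1) = BB m (real n) * x ^ (m + 1 - n)" if "n < m + 2" for n
    proof -
      have "x ^ (m + 1) = x ^ n * x ^ (m + 1 - n)" using that by (simp add: power_add[symmetric])
      then show ?thesis using x by (simp add: power_one_over field_simps)
    qed
    ultimately show "(\<Sum>n\<le>m + 1. BB m (real n) * (1 / x) ^ n * x ^ (m + 1)) = (\<Sum>n<m + 2. BB m (real n) * x ^ (m + 1 - n))"
      by (intro sum.cong) auto
  qed
  also have "\<dots> = (\<Sum>n<m+2. h (m + 2 - Suc n))"
    by (rule sum.nat_diff_reindex[symmetric])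
  also have "\<dots> = (\<Sum>n<m+2. BB m (real n) * x ^ n)"
  proof (rule sum.cong[OF refl])
    fix n assume "n \<in> {..<m+2}"
    then have n: "n \<le> m + 1" by auto
    have "real (m + 1 - n) = real m + 1 - real n" using n by (simp add: of_nat_diff)
    then have "BB m (real (m + 1 - n)) = BB m (real m + 1 - real n)" by simp
    also have "\<dots> = BB m (real n)" by (rule B_sym[OF m])
    finally show "h (m + 2 - Suc n) = BB m (real n) * x ^ n"
      unfolding h_def using n by simp
  qed
  also have "\<dots> = PiB m x"
  proof -
    have eq: "{..<m+2} = {..m+1}" by auto
    show ?thesis unfolding PiB_def eq ..
  qed
  finally show ?thesis .
qed

definition Zr :: "nat \<Rightarrow> real set" where
  "Zr m = {x. x < 0 \<and> PiB m x = 0}"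

definition PP :: "nat \<Rightarrow> real poly" where
  "PP m = (\<Sum>n\<le>m+1. monom (BB m (real n)) n)"

lemma poly_PP: "poly (PP m) x = PiB m x"
  unfolding PP_def PiB_def by (simp add: poly_sum poly_monom)

lemma coeff_PP: "coeff (PP m) k = (if k \<le> m + 1 then BB m (real k) else 0)"
proof -
  have "coeff (PP m) k = (\<Sum>n\<in>{..m+1}. if n = k then BB m (real n) else 0)"
    unfolding PP_def coeff_sum coeff_monom by simp
  also have "\<dots> = (if k \<in> {..m+1} then BB m (real k) else 0)"
    by (rule sum.delta) simp
  finally show ?thesis by simp
qed

lemma PP_nz: "m \<ge> 1 \<Longrightarrow> PP m \<noteq> 0"
proof
  assume m: "m \<ge> 1" and "PP m = 0"
  then have "coeff (PP m) 1 = 0" by simp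
  moreover have "coeff (PP m) 1 = BB m 1" using m by (simp add: coeff_PP)
  moreover have "BB m 1 > 0" using m by (intro B_pos) auto
  ultimately show False by simp
qed

lemma Zr_finite: "m \<ge> 1 \<Longrightarrow> finite (Zr m)"
proof -
  assume m: "m \<ge> 1"
  have "Zr m \<subseteq> {x. poly (PP m) x = 0}" unfolding Zr_def poly_PP by auto
  then show ?thesis using poly_roots_finite[OF PP_nz[OF m]] finite_subset by blast
qed

lemma Zr_recip: "m \<ge> 1 \<Longrightarrow> x \<in> Zr m \<Longrightarrow> 1 / x \<in> Zr m"
proof -
  assume m: "m \<ge> 1" and x: "x \<in> Zr m"
  then have "x < 0" "PiB m x = 0" by (auto simp: Zr_def)
  then have "PiB m (1 / (1 / x)) * (1 / x) ^ (m+1) = PiB m (1 / x)"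
    by (intro PiB_sym[OF m]) auto
  then have "PiB m (1 / x) = 0" using \<open>PiB m x = 0\<close> by simp
  then show ?thesis using \<open>x < 0\<close> by (simp add: Zr_def)
qed

lemma count_step:
  assumes m: "m \<ge> 1" and ne: "Zr m \<noteq> {}"
  shows "card (Zr (Suc m)) \<ge> card (Zr m) + 1"
proof -
  define S where "S = Zr m"
  have finS: "finite S" using Zr_finite[OF m] by (simp add: S_def)
  define nx where "nx s = Min ({t \<in> S. s < t} \<union> {0})" for s
  have nx1: "nx s \<in> S \<union> {0}" for s
  proof -
    have "Min ({t \<in> S. s < t} \<union> {0}) \<in> {t \<in> S. s < t} \<union> {0}"
      by (rule Min_in) (use finS in auto)
    then show ?thesis unfolding nx_def by auto
  qed
  have nx2: "nx s \<le> t" if "t \<in> S" "s < t" for s t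
    unfolding nx_def by (rule Min_le) (use finS that in auto)
  have nx3: "nx s \<le> 0" for s unfolding nx_def by (rule Min_le) (use finS in auto)
  have nx4: "s < nx s" if "s \<in> S" for s
  proof -
    have "s < 0" using that by (simp add: S_def Zr_def)
    have "\<forall>t \<in> {t \<in> S. s < t} \<union> {0}. s < t" using \<open>s < 0\<close> by auto
    then show ?thesis unfolding nx_def using finS by (subst Min_gr_iff) auto
  qed
  have Pnx: "PiB m (nx s) = 0" for s
    using nx1[of s] Pi_0[OF m] by (auto simp: S_def Zr_def)
  have "\<exists>c. s < c \<and> c < nx s \<and> PiB (Suc m) c = 0" if "s \<in> S" for s
    by (rule rolle_step[OF m nx4[OF that] nx3]) (use that Pnx in \<open>auto simp: S_def Zr_def\<close>)
  then obtain c where c: "\<And>s. s \<in> S \<Longrightarrow> s < c s \<and> c s < nx s \<and> PiB (Suc m) (c s) = 0"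
    by metis
  have cZ: "c s \<in> Zr (Suc m)" if "s \<in> S" for s
    using c[OF that] nx3[of s] by (auto simp: Zr_def)
  have inj: "inj_on c S"
  proof (rule inj_onI, rule ccontr)
    fix s s' assume s: "s \<in> S" "s' \<in> S" "c s = c s'" "s \<noteq> s'"
    show False
    proof (cases "s < s'")
      case True
      then have "c s < s'" using c[OF s(1)] nx2[OF s(2) True] by auto
      then show False using c[OF s(2)] s(3) by auto
    next
      case False
      then have "s' < s" using s(4) by auto
      then have "c s' < s" using c[OF s(2)] nx2[OF s(1)] by fastforce
      then show False using c[OF s(1)] s(3) by auto
    qed
  qed
  define M where "M = Max S"
  have MS: "M \<in> S" unfolding M_def using finS ne by (simp add: S_def)
  have Mneg: "M < 0" using MS by (simp add: S_def Zr_def)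
  define e where "e = 1 / c M"
  have cM: "M < c M" "c M < 0" using c[OF MS] nx3[of M] by auto
  have eZ: "e \<in> Zr (Suc m)" unfolding e_def by (rule Zr_recip) (use m cZ[OF MS] in auto)
  have "e < 1 / M" unfolding e_def using cM Mneg by (simp add: divide_simps)
  have e_less: "e < s" if "s \<in> S" for s
  proof -
    have "1 / s \<in> S" using Zr_recip[OF m] that by (simp add: S_def)
    then have "1 / s \<le> M" unfolding M_def using finS by simp
    moreover have "s < 0" using that by (simp add: S_def Zr_def)
    ultimately have "1 / M \<le> s" using Mneg by (simp add: divide_simps mult.commute)
    then show ?thesis using \<open>e < 1 / M\<close> by simp
  qed
  have "e \<notin> c ` S"
  proof
    assume "e \<in> c ` S"
    then obtain s where "s \<in> S" "e = c s" by auto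
    then show False using e_less[of s] c[of s] by auto
  qed
  have "card (insert e (c ` S)) = card S + 1"
    using \<open>e \<notin> c ` S\<close> card_image[OF inj] finS by simp
  moreover have "insert e (c ` S) \<subseteq> Zr (Suc m)" using eZ cZ by auto
  moreover have "finite (Zr (Suc m))" by (rule Zr_finite) simp
  ultimately show ?thesis using card_mono by (metis S_def)
qed


lemma Zr2: "-1 \<in> Zr 2"
proof -
  have s: "BB 2 2 = BB 2 1" using B_sym[of 2 1] by simp
  have z0: "BB 2 0 = 0" and z3: "BB 2 3 = 0" using B_zero[of 2 0] B_zero[of 2 3] by auto
  have "PiB 2 (-1) = BB 2 0 - BB 2 1 + BB 2 2 - BB 2 3"
    unfolding PiB_def by (simp add: numeral_3_eq_3 numeral_2_eq_2)
  then have "PiB 2 (-1) = 0" using s z0 z3 by simp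
  then show ?thesis by (simp add: Zr_def)
qed

lemma Zr_card: "m \<ge> 1 \<Longrightarrow> card (Zr m) \<ge> m - 1"
proof (induction m rule: nat_induct_at_least)
  case base then show ?case by simp
next
  case (Suc m)
  show ?case
  proof (cases "m = 1")
    case True
    have "finite (Zr 2)" by (rule Zr_finite) simp
    then have "card (Zr 2) \<ge> 1" using Zr2 by (metis card_0_eq empty_iff less_one not_le)
    then show ?thesis using True by (simp add: numeral_2_eq_2)
  next
    case False
    then have "m \<ge> 2" using Suc.hyps by simp
    then have "card (Zr m) \<ge> 1" using Suc.IH by simp
    then have "Zr m \<noteq> {}" by auto
    then have "card (Zr (Suc m)) \<ge> card (Zr m) + 1" by (rule count_step[OF Suc.hyps])
    then show ?thesis using Suc.IH by simp
  qed
qed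

definition PC :: "nat \<Rightarrow> complex poly" where
  "PC m = (\<Sum>n\<le>m. monom (complex_of_real (BB m (real n))) n)"

lemma poly_PC: "poly (PC m) z = (\<Sum>n\<le>m. complex_of_real (BB m (real n)) * z ^ n)"
  unfolding PC_def by (simp add: poly_sum poly_monom)

lemma degree_PC: "degree (PC m) \<le> m"
  unfolding PC_def by (intro degree_sum_le) (auto intro: order.trans[OF degree_monom_le])

lemma PC_nz: assumes m: "m \<ge> 1" shows "PC m \<noteq> 0"
proof
  assume "PC m = 0"
  then have "coeff (PC m) 1 = 0" by simp
  moreover have "coeff (PC m) 1 = complex_of_real (BB m 1)"
  proof -
    have "coeff (PC m) 1 = (\<Sum>n\<in>{..m}. if n = 1 then complex_of_real (BB m (real n)) else 0)"
      unfolding PC_def coeff_sum coeff_monom by simp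
    also have "\<dots> = (if 1 \<in> {..m} then complex_of_real (BB m (real 1)) else 0)"
      by (rule sum.delta) simp
    finally show ?thesis using m by simp
  qed
  moreover have "BB m 1 > 0" using m by (intro B_pos) auto
  ultimately show False by simp
qed

lemma PC_real: assumes m: "m \<ge> 1" shows "poly (PC m) (complex_of_real x) = complex_of_real (PiB m x)"
proof -
  have "PiB m x = (\<Sum>n\<le>m. BB m (real n) * x ^ n)"
    unfolding PiB_def using B_zero[OF m, of "real (m+1)"] by simp
  then show ?thesis unfolding poly_PC by simp
qed

lemma PC_roots:
  assumes m: "m \<ge> 1" and z: "poly (PC m) z = 0"
  shows "\<exists>x. x \<le> 0 \<and> z = complex_of_real x"
proof (rule ccontr)
  assume nz: "\<not> (\<exists>x. x \<le> 0 \<and> z = complex_of_real x)"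
  define R where "R = {z. poly (PC m) z = 0}"
  have finR: "finite R" unfolding R_def by (rule poly_roots_finite[OF PC_nz[OF m]])
  have cR: "card R \<le> m" unfolding R_def using card_poly_roots_bound[OF PC_nz[OF m]] degree_PC[of m] by linarith
  define W where "W = complex_of_real ` insert 0 (Zr m)"
  have WR: "insert z W \<subseteq> R"
    unfolding W_def R_def using z PC_real[OF m] Pi_0[OF m] PC_real[OF m, of 0] by (auto simp: Zr_def)
  have "0 \<notin> Zr m" by (simp add: Zr_def)
  then have "card (insert 0 (Zr m)) = card (Zr m) + 1" using Zr_finite[OF m] by simp
  then have cW: "card W = card (Zr m) + 1"
    unfolding W_def by (subst card_image) (auto simp: inj_on_def)
  have "z \<notin> W" unfolding W_def using nz by (force simp: Zr_def)
  then have "card (insert z W) = card W + 1"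
    using Zr_finite[OF m] unfolding W_def by simp
  then have "card (insert z W) \<ge> m + 1" using cW Zr_card[OF m] by linarith
  moreover have "card (insert z W) \<le> card R" by (rule card_mono[OF finR WR])
  ultimately show False using cR by linarith
qed


lemma sum_even_odd:
  fixes f :: "nat \<Rightarrow> 'a::comm_monoid_add"
  shows "(\<Sum>n<2*N. f n) = (\<Sum>k<N. f (2*k)) + (\<Sum>k<N. f (2*k+1))"
proof (induction N)
  case 0 then show ?case by simp
next
  case (Suc N)
  have "(\<Sum>n<2 * Suc N. f n) = (\<Sum>n<2*N. f n) + f (2*N) + f (2*N+1)"
    by (simp add: add.assoc)
  then show ?case using Suc by (simp add: algebra_simps)
qed

definition Op :: "nat \<Rightarrow> complex poly" where
  "Op m = (\<Sum>n\<le>m. monom (complex_of_real (BB m (real n + 1/2))) n)"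

definition Dp :: "nat \<Rightarrow> complex poly" where
  "Dp m = (\<Sum>n\<le>2*m+1. monom (complex_of_real (BB m (real n / 2))) n)"

lemma coeff_sum_monom:
  fixes f :: "nat \<Rightarrow> complex"
  shows "coeff (\<Sum>n\<le>N. monom (f n) n) k = (if k \<le> N then f k else 0)"
proof -
  have "coeff (\<Sum>n\<le>N. monom (f n) n) k = (\<Sum>n\<in>{..N}. if n = k then f n else 0)"
    unfolding coeff_sum coeff_monom by simp
  also have "\<dots> = (if k \<in> {..N} then f k else 0)"
    by (rule sum.delta) simp
  finally show ?thesis by simp
qed

lemma coeff_PC: "m \<ge> 1 \<Longrightarrow> coeff (PC m) k = complex_of_real (BB m (real k))"
  unfolding PC_def coeff_sum_monom using B_zero[of m "real k"] by auto

lemma coeff_Dp: "m \<ge> 1 \<Longrightarrow> coeff (Dp m) k = complex_of_real (BB m (real k / 2))"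
  unfolding Dp_def coeff_sum_monom using B_zero[of m "real k / 2"] by auto

lemma coeff_Op_m: "m \<ge> 1 \<Longrightarrow> coeff (Op m) m = complex_of_real (BB m (real m + 1/2))"
  unfolding Op_def coeff_sum_monom by simp

lemma degree_Op: "degree (Op m) \<le> m"
  unfolding Op_def by (intro degree_sum_le) (auto intro: order.trans[OF degree_monom_le])

lemma Op_nz: "m \<ge> 1 \<Longrightarrow> Op m \<noteq> 0" and degree_Op_eq: "m \<ge> 1 \<Longrightarrow> degree (Op m) = m"
proof -
  assume m: "m \<ge> 1"
  have "BB m (real m + 1/2) > 0" using m by (intro B_pos) auto
  then have c: "coeff (Op m) m \<noteq> 0" using coeff_Op_m[OF m] by simp
  then show "Op m \<noteq> 0" by auto
  show "degree (Op m) = m" using c degree_Op[of m] le_degree by (metis antisym)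
qed

lemma coeff_binom: "coeff ([:1, 1:] ^ N) i = (of_nat (N choose i) :: complex)"
proof (cases "i \<le> N")
  case True
  then show ?thesis using coeff_linear_poly_power[OF True, of "1::complex" 1] by simp
next
  case False
  have "degree ([:1::complex, 1:] ^ N) \<le> N"
    using degree_power_le[of "[:1::complex, 1:]" N] by simp
  then have "coeff ([:1::complex, 1:] ^ N) i = 0" using False by (intro coeff_eq_0) auto
  then show ?thesis using False by simp
qed

lemma D_eq:
  assumes m: "m \<ge> 1"
  shows "Dp m = Polynomial.smult (1 / 2 ^ m) ([:1, 1:] ^ (m+1) * PC m)"
proof (rule poly_eqI)
  fix n
  let ?g = "\<lambda>i. real (m+1 choose i) * BB m (real n - real i)"
  have s1: "(\<Sum>i\<le>n. real (m+1 choose i) * BB m (real (n - i))) = (\<Sum>i\<le>n+m+1. ?g i)"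
  proof -
    have "(\<Sum>i\<le>n. real (m+1 choose i) * BB m (real (n - i))) = (\<Sum>i\<le>n. ?g i)"
      by (rule sum.cong) (auto simp: of_nat_diff)
    also have "\<dots> = (\<Sum>i\<le>n+m+1. ?g i)"
      by (rule sum.mono_neutral_left) (auto intro!: B_zero[OF m])
    finally show ?thesis .
  qed
  have s2: "(\<Sum>k\<le>m+1. ?g k) = (\<Sum>i\<le>n+m+1. ?g i)"
    by (rule sum.mono_neutral_left) auto
  have "coeff (Polynomial.smult (1 / 2 ^ m) ([:1, 1:] ^ (m+1) * PC m)) n
      = (1 / 2 ^ m) * (\<Sum>i\<le>n. of_nat (m+1 choose i) * complex_of_real (BB m (real (n - i))))"
    by (simp only: coeff_smult coeff_mult coeff_binom coeff_PC[OF m])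
  also have "\<dots> = complex_of_real ((\<Sum>i\<le>n. real (m+1 choose i) * BB m (real (n - i))) / 2 ^ m)"
    by (simp add: field_simps)
  also have "\<dots> = complex_of_real (BB m (real n / 2))"
    using refinement[OF m, of "real n"] s1 s2 by simp
  finally show "coeff (Dp m) n = coeff (Polynomial.smult (1 / 2 ^ m) ([:1, 1:] ^ (m+1) * PC m)) n"
    using coeff_Dp[OF m] by simp
qed

lemma Dp_split: "poly (Dp m) z = poly (PC m) (z^2) + z * poly (Op m) (z^2)"
proof -
  have eq: "{..2*m+1} = {..<2*(m+1)}" by auto
  have "poly (Dp m) z = (\<Sum>n<2*(m+1). complex_of_real (BB m (real n / 2)) * z ^ n)"
    unfolding Dp_def eq by (simp add: poly_sum poly_monom)
  also have "\<dots> = (\<Sum>k<m+1. complex_of_real (BB m (real (2*k) / 2)) * z ^ (2*k))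
      + (\<Sum>k<m+1. complex_of_real (BB m (real (2*k+1) / 2)) * z ^ (2*k+1))"
    by (rule sum_even_odd)
  also have "(\<Sum>k<m+1. complex_of_real (BB m (real (2*k) / 2)) * z ^ (2*k)) = poly (PC m) (z^2)"
  proof -
    have eq2: "{..<m+1} = {..m}" by auto
    show ?thesis unfolding poly_PC eq2 by (simp add: power_mult)
  qed
  also have "(\<Sum>k<m+1. complex_of_real (BB m (real (2*k+1) / 2)) * z ^ (2*k+1)) = z * poly (Op m) (z^2)"
  proof -
    have eq2: "{..<m+1} = {..m}" by auto
    have a: "real (2*k+1) / 2 = real k + 1/2" for k by simp
    have p: "z ^ (2*k+1) = z * (z^2)^k" for k
      by (simp only: Suc_eq_plus1[symmetric] power_Suc power_mult)
    show ?thesis unfolding Op_def poly_sum poly_monom eq2 sum_distrib_left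
    proof (intro sum.cong refl)
      fix k
      show "complex_of_real (BB m (real (2*k+1) / 2)) * z ^ (2*k+1) = z * (complex_of_real (BB m (real k + 1/2)) * (z^2)^k)"
        unfolding a p by (simp only: mult_ac)
    qed
  qed
  finally show ?thesis .
qed

lemma no_common_root:
  assumes m: "m \<ge> 1" and e: "poly (PC m) w = 0" and o: "poly (Op m) w = 0"
  shows False
proof -
  obtain r where r: "r \<le> 0" "w = complex_of_real r" using PC_roots[OF m e] by blast
  have o0: "poly (Op m) 0 = complex_of_real (BB m (1/2))"
    unfolding Op_def by (simp add: poly_sum poly_monom zero_power)
  have "BB m (1/2) > 0" using m by (intro B_pos) auto
  then have "r \<noteq> 0" using o o0 r by auto
  then have rn: "r < 0" using r by simp
  define \<zeta> where "\<zeta> = \<i> * complex_of_real (sqrt (- r))"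
  have z2: "\<zeta>^2 = w"
    unfolding \<zeta>_def r(2) using rn by (simp add: power_mult_distrib of_real_power[symmetric])
  have "poly (Dp m) \<zeta> = 0" using Dp_split[of m \<zeta>] z2 e o by simp
  then have "(1 / 2 ^ m) * (poly [:1, 1:] \<zeta> ^ (m+1) * poly (PC m) \<zeta>) = 0"
    using D_eq[OF m] by (simp only: poly_smult poly_mult poly_power)
  moreover have "poly [:1, 1:] \<zeta> \<noteq> 0"
  proof
    assume "poly [:1, 1:] \<zeta> = 0"
    then have "Re (1 + \<zeta>) = 0" by simp
    then show False unfolding \<zeta>_def by simp
  qed
  ultimately have "poly (PC m) \<zeta> = 0" by (simp del: poly_pCons)
  then obtain x where "\<zeta> = complex_of_real x" using PC_roots[OF m] by blast
  then have "Im \<zeta> = 0" by simp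
  moreover have "Im \<zeta> = sqrt (- r)" unfolding \<zeta>_def by simp
  ultimately show False using rn by simp
qed

lemma coprime_PC_Op:
  assumes m: "m \<ge> 1"
  shows "coprime (Op m) (PC m)"
proof -
  define G where "G = gcd (Op m) (PC m)"
  have G0: "G \<noteq> 0" unfolding G_def using Op_nz[OF m] by simp
  have "degree G = 0"
  proof (rule ccontr)
    assume "degree G \<noteq> 0"
    then have "\<not> (\<exists>a l. a \<noteq> 0 \<and> l = 0 \<and> G = pCons a l)" by auto
    then obtain z where z: "poly G z = 0" using fundamental_theorem_of_algebra_alt by blast
    have "G dvd Op m" "G dvd PC m" unfolding G_def by auto
    then have "poly (Op m) z = 0" "poly (PC m) z = 0" using z by (auto elim!: dvdE)
    then show False using no_common_root[OF m] by blast
  qed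
  then have "is_unit G" using is_unit_iff_degree[OF G0] by simp
  then show ?thesis unfolding G_def using is_unit_gcd[of "Op m" "PC m"] by blast
qed


lemma coeff_monom_mult_gen:
  fixes p :: "'a::comm_semiring_1 poly"
  shows "coeff (monom c d * p) N = (if d \<le> N then c * coeff p (N - d) else 0)"
proof -
  have "coeff (monom c d * p) N = (\<Sum>i\<in>{..N}. if d = i then c * coeff p (N - i) else 0)"
    unfolding coeff_mult coeff_monom by (intro sum.cong) auto
  also have "\<dots> = (if d \<in> {..N} then c * coeff p (N - d) else 0)"
    by (rule sum.delta') simp
  finally show ?thesis by simp
qed

lemma coeff_Op: "m \<ge> 1 \<Longrightarrow> coeff (Op m) k = complex_of_real (BB m (real k + 1/2))"
  unfolding Op_def coeff_sum_monom using B_zero[of m "real k + 1/2"] by auto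

lemma sum_even_odd_odd:
  fixes f :: "nat \<Rightarrow> real"
  shows "(\<Sum>n<2*N+1. f n) = (\<Sum>k<N+1. f (2*k)) + (\<Sum>k<N. f (2*k+1))"
proof -
  have "(\<Sum>n<2*(N+1). f n) = (\<Sum>k<N+1. f (2*k)) + (\<Sum>k<N+1. f (2*k+1))"
    by (rule sum_even_odd)
  moreover have "(\<Sum>n<2*(N+1). f n) = (\<Sum>n<2*N+1. f n) + f (2*N+1)" by simp
  moreover have "(\<Sum>k<N+1. f (2*k+1)) = (\<Sum>k<N. f (2*k+1)) + f (2*N+1)" by simp
  ultimately show ?thesis by (simp add: add.assoc add.commute add.left_commute)
qed

lemma half1: "(x::real) = 2*a + 1 + 2*b \<Longrightarrow> x / 2 = a + b + 1/2" by simp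
lemma half2: "(x::real) = 2*a + 2 + 2*b \<Longrightarrow> x / 2 = a + 1 + b" by simp

lemma kernel_trivial:
  fixes w :: "nat \<Rightarrow> real"
  assumes m: "m \<ge> 1"
    and H: "\<And>j. j < 2*m+1 \<Longrightarrow> (\<Sum>i<2*m+1. BB m (real (2*m+1+i) / 2 - real j) * w i) = 0"
  shows "\<And>i. i < 2*m+1 \<Longrightarrow> w i = 0"
proof -
  define \<alpha> where "\<alpha> = (\<Sum>k<m. monom (complex_of_real (w (2*k+1))) (m-1-k))"
  define \<beta> where "\<beta> = (\<Sum>k\<le>m. monom (complex_of_real (w (2*k))) (m-k))"
  define Q where "Q = \<alpha> * PC m + \<beta> * Op m"
  have cA: "coeff (\<alpha> * PC m) N = complex_of_real (\<Sum>k<m. w (2*k+1) * BB m (real N - real m + 1 + real k))" for N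
  proof -
    have "coeff (\<alpha> * PC m) N = (\<Sum>k<m. coeff (monom (complex_of_real (w (2*k+1))) (m-1-k) * PC m) N)"
      unfolding \<alpha>_def sum_distrib_right coeff_sum ..
    also have "\<dots> = (\<Sum>k<m. complex_of_real (w (2*k+1) * BB m (real N - real m + 1 + real k)))"
    proof (rule sum.cong[OF refl])
      fix k assume k: "k \<in> {..<m}"
      show "coeff (monom (complex_of_real (w (2*k+1))) (m-1-k) * PC m) N = complex_of_real (w (2*k+1) * BB m (real N - real m + 1 + real k))"
      proof (cases "m - 1 - k \<le> N")
        case True
        then have "real (N - (m - 1 - k)) = real N - real m + 1 + real k" using k by (auto simp: of_nat_diff)
        then show ?thesis using True by (simp only: coeff_monom_mult_gen coeff_PC[OF m] if_True of_real_mult)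
      next
        case False
        then have "real N - real m + 1 + real k \<le> 0" using k by auto
        then show ?thesis using False by (simp add: coeff_monom_mult_gen B_zero[OF m])
      qed
    qed
    finally show ?thesis by simp
  qed
  have cB: "coeff (\<beta> * Op m) N = complex_of_real (\<Sum>k\<le>m. w (2*k) * BB m (real N - real m + real k + 1/2))" for N
  proof -
    have "coeff (\<beta> * Op m) N = (\<Sum>k\<le>m. coeff (monom (complex_of_real (w (2*k))) (m-k) * Op m) N)"
      unfolding \<beta>_def sum_distrib_right coeff_sum ..
    also have "\<dots> = (\<Sum>k\<le>m. complex_of_real (w (2*k) * BB m (real N - real m + real k + 1/2)))"
    proof (rule sum.cong[OF refl])
      fix k assume k: "k \<in> {..m}"
      show "coeff (monom (complex_of_real (w (2*k))) (m-k) * Op m) N = complex_of_real (w (2*k) * BB m (real N - real m + real k + 1/2))"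
      proof (cases "m - k \<le> N")
        case True
        then have "real (N - (m - k)) = real N - real m + real k" using k by (auto simp: of_nat_diff)
        then show ?thesis using True by (simp only: coeff_monom_mult_gen coeff_Op[OF m] if_True of_real_mult)
      next
        case False
        then have "real N - real m + real k + 1/2 \<le> 0" using k by auto
        then show ?thesis using False by (simp add: coeff_monom_mult_gen B_zero[OF m])
      qed
    qed
    finally show ?thesis by simp
  qed
  have Q0: "Q = 0"
  proof (rule poly_eqI)
    fix N
    show "coeff Q N = coeff 0 N"
    proof (cases "N \<le> 2*m")
      case True
      define j where "j = 2*m - N"
      have j: "j < 2*m+1" unfolding j_def by simp
      have rj: "real j = 2 * real m - real N" using True unfolding j_def by (simp add: of_nat_diff)
      have S0: "(\<Sum>i<2*m+1. BB m (real (2*m+1+i) / 2 - real j) * w i)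
          = (\<Sum>k<m+1. BB m (real (2*m+1+2*k) / 2 - real j) * w (2*k)) + (\<Sum>k<m. BB m (real (2*m+1+(2*k+1)) / 2 - real j) * w (2*k+1))"
        using sum_even_odd_odd[of "\<lambda>i. BB m (real (2*m+1+i) / 2 - real j) * w i" m] by simp
      have S1: "(\<Sum>k<m+1. BB m (real (2*m+1+2*k) / 2 - real j) * w (2*k)) = (\<Sum>k\<le>m. w (2*k) * BB m (real N - real m + real k + 1/2))"
      proof -
        have eq: "{..<m+1} = {..m}" by auto
        have fk: "real (2*m+1+2*k) / 2 - real j = real N - real m + real k + 1/2" for k
        proof -
          have "real (2*m+1+2*k) = 2*real m + 1 + 2*real k" by simp
          then have "real (2*m+1+2*k) / 2 = real m + real k + 1/2" by (rule half1)
          then show ?thesis using rj by linarith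
        qed
        show ?thesis unfolding eq
        proof (intro sum.cong refl)
          fix k
          show "BB m (real (2*m+1+2*k) / 2 - real j) * w (2*k) = w (2*k) * BB m (real N - real m + real k + 1/2)"
            unfolding fk by (rule mult.commute)
        qed
      qed
      have S2: "(\<Sum>k<m. BB m (real (2*m+1+(2*k+1)) / 2 - real j) * w (2*k+1)) = (\<Sum>k<m. w (2*k+1) * BB m (real N - real m + 1 + real k))"
      proof -
        have fk: "real (2*m+1+(2*k+1)) / 2 - real j = real N - real m + 1 + real k" for k
        proof -
          have "real (2*m+1+(2*k+1)) = 2*real m + 2 + 2*real k" by simp
          then have "real (2*m+1+(2*k+1)) / 2 = real m + 1 + real k" by (rule half2)
          then show ?thesis using rj by linarith
        qed
        show ?thesis
        proof (intro sum.cong refl)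
          fix k
          show "BB m (real (2*m+1+(2*k+1)) / 2 - real j) * w (2*k+1) = w (2*k+1) * BB m (real N - real m + 1 + real k)"
            unfolding fk by (rule mult.commute)
        qed
      qed
      have "(\<Sum>k\<le>m. w (2*k) * BB m (real N - real m + real k + 1/2)) + (\<Sum>k<m. w (2*k+1) * BB m (real N - real m + 1 + real k)) = 0"
        using H[OF j] S0 S1 S2 by simp
      then have "(\<Sum>k<m. w (2*k+1) * BB m (real N - real m + 1 + real k)) + (\<Sum>k\<le>m. w (2*k) * BB m (real N - real m + real k + 1/2)) = 0"
        by (simp add: add.commute)
      then have "complex_of_real ((\<Sum>k<m. w (2*k+1) * BB m (real N - real m + 1 + real k)) + (\<Sum>k\<le>m. w (2*k) * BB m (real N - real m + real k + 1/2))) = 0"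
        by (simp only: of_real_0)
      then show ?thesis unfolding Q_def coeff_add cA cB of_real_add by simp
    next
      case False
      have "degree \<alpha> \<le> m - 1" unfolding \<alpha>_def
        by (intro degree_sum_le) (auto intro: order.trans[OF degree_monom_le])
      then have d1: "degree (\<alpha> * PC m) \<le> 2 * m"
        using degree_mult_le[of \<alpha> "PC m"] degree_PC[of m] by linarith
      have "degree \<beta> \<le> m" unfolding \<beta>_def
        by (intro degree_sum_le) (auto intro: order.trans[OF degree_monom_le])
      then have d2: "degree (\<beta> * Op m) \<le> 2 * m"
        using degree_mult_le[of \<beta> "Op m"] degree_Op[of m] by linarith
      have "degree Q \<le> 2 * m" unfolding Q_def using degree_add_le[OF d1 d2] .
      then show ?thesis using False by (simp add: coeff_eq_0)
    qed
  qed
  then have "Op m dvd \<alpha> * PC m"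
    unfolding Q_def by (metis add_eq_0_iff dvd_minus_iff dvd_triv_right)
  then have "Op m dvd \<alpha>" using coprime_dvd_mult_left_iff[OF coprime_PC_Op[OF m]] by blast
  have a0: "\<alpha> = 0"
  proof (rule ccontr)
    assume "\<alpha> \<noteq> 0"
    then have "degree (Op m) \<le> degree \<alpha>" using dvd_imp_degree_le[OF \<open>Op m dvd \<alpha>\<close>] by simp
    moreover have "degree \<alpha> \<le> m - 1" unfolding \<alpha>_def
      by (intro degree_sum_le) (auto intro: order.trans[OF degree_monom_le])
    ultimately show False using degree_Op_eq[OF m] m by linarith
  qed
  then have "\<beta> * Op m = 0" using Q0 unfolding Q_def by simp
  then have b0: "\<beta> = 0" using Op_nz[OF m] by simp
  have wo: "w (2*k+1) = 0" if k: "k < m" for k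
  proof -
    have "coeff \<alpha> (m-1-k) = (\<Sum>k'\<in>{..<m}. if k' = k then complex_of_real (w (2*k'+1)) else 0)"
      unfolding \<alpha>_def coeff_sum coeff_monom using k by (intro sum.cong) auto
    also have "\<dots> = complex_of_real (w (2*k+1))" by (subst sum.delta) (use k in auto)
    finally show ?thesis using a0 by simp
  qed
  have we: "w (2*k) = 0" if k: "k \<le> m" for k
  proof -
    have "coeff \<beta> (m-k) = (\<Sum>k'\<in>{..m}. if k' = k then complex_of_real (w (2*k')) else 0)"
      unfolding \<beta>_def coeff_sum coeff_monom using k by (intro sum.cong) auto
    also have "\<dots> = complex_of_real (w (2*k))" by (subst sum.delta) (use k in auto)
    finally show ?thesis using b0 by simp
  qed
  fix i assume i: "i < 2*m+1"
  show "w i = 0"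
  proof (cases "even i")
    case True
    then obtain k where "i = 2*k" by (auto elim: evenE)
    then show ?thesis using we[of k] i by simp
  next
    case False
    then obtain k where "i = 2*k+1" by (auto elim: oddE)
    then show ?thesis using wo[of k] i by simp
  qed
qed

theorem mainTheorem9:
  fixes m :: nat
  assumes "m \<ge> 1"
  shows "det (A_X m) \<noteq> 0"
proof
  assume d: "det (A_X m) = 0"
  define n where "n = 2*m+1"
  have A: "A_X m \<in> carrier_mat n n" unfolding A_X_def n_def by simp
  have AT: "transpose_mat (A_X m) \<in> carrier_mat n n" using A by simp
  have "det (transpose_mat (A_X m)) = 0" using d det_transpose[OF A] by simp
  then obtain u where u: "u \<in> carrier_vec n" "u \<noteq> 0\<^sub>v n" "transpose_mat (A_X m) *\<^sub>v u = 0\<^sub>v n"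
    using det_0_iff_vec_prod_zero[OF AT] by blast
  have ent: "A_X m $$ (i, j) = BB m (real (2*m+1+i) / 2 - real j)" if "i < n" "j < n" for i j
    using that unfolding A_X_def n_def omega_def by (simp add: field_simps)
  have H: "(\<Sum>i<2*m+1. BB m (real (2*m+1+i) / 2 - real j) * (u $ i)) = 0" if j: "j < 2*m+1" for j
  proof -
    have "(transpose_mat (A_X m) *\<^sub>v u) $ j = 0" using u(3) j by (simp add: n_def)
    moreover have "(transpose_mat (A_X m) *\<^sub>v u) $ j = (\<Sum>i\<in>{0..<n}. A_X m $$ (i, j) * u $ i)"
      using j u(1) A unfolding n_def by (simp add: scalar_prod_def)
    moreover have "(\<Sum>i\<in>{0..<n}. A_X m $$ (i, j) * u $ i) = (\<Sum>i<2*m+1. BB m (real (2*m+1+i) / 2 - real j) * (u $ i))"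
      using j by (intro sum.cong) (auto simp: ent n_def atLeast0LessThan)
    ultimately show ?thesis by simp
  qed
  have "\<And>i. i < 2*m+1 \<Longrightarrow> u $ i = 0" by (rule kernel_trivial[OF assms H])
  then have "u = 0\<^sub>v n" using u(1) unfolding n_def by (intro eq_vecI) auto
  then show False using u(2) by simp
qed


end
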